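(* Let $M_{c,2}$ be the set of positive integers $n$ such that $g(n)-\gamma_c(X_n)\ge 2$. Then the set $\omega(M_{c,2})=\{\omega(n): n\in M_{c,2}\}$ is unbounded; that is, for every $N$ there is $n\in M_{c,2}$ with more than $N$ distinct prime factors.
   Context: For a positive integer $n$, the unitary Cayley graph $X_n$ is the graph on vertex set $\{0,1,\dots,n-1\}$ in which $a$ and $b$ are adjacent if and only if $\gcd(a-b,n)=1$. The Jacobsthal function $g(n)$ is the least positive integer $m$ such that every set of $m$ consecutive integers contains an integer coprime to $n$. A set $S$ of vertices of a graph is dominating if every vertex is in $S$ or adjacent to a vertex of $S$. A dominating cycle is a cycle in the graph whose vertex set is a dominating set; the cycle domination number $\gamma_c(G)$ is the minimum number of vertices of a dominating cycle of $G$ (for $X_n$ such a cycle always exists, e.g. $(0,1,\dots,n-1)$). $\omega(n)$ denotes the number of distinct prime factors of $n$. *)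

theory Defs
  imports "HOL-Computational_Algebra.Primes"
begin

definition ucayley_adj :: "nat \<Rightarrow> nat \<Rightarrow> nat \<Rightarrow> bool" where
  "ucayley_adj n a b \<longleftrightarrow> a < n \<and> b < n \<and> coprime (int a - int b) (int n)"

definition ucayley_cycle :: "nat \<Rightarrow> nat list \<Rightarrow> bool" where
  "ucayley_cycle n cs \<longleftrightarrow>
     length cs \<ge> 3 \<and> distinct cs \<and> set cs \<subseteq> {0..<n} \<and>
     (\<forall>i < length cs - 1. ucayley_adj n (cs ! i) (cs ! (i + 1))) \<and>
     ucayley_adj n (last cs) (hd cs)"

definition ucayley_dominating :: "nat \<Rightarrow> nat set \<Rightarrow> bool" where
  "ucayley_dominating n S \<longleftrightarrow> S \<subseteq> {0..<n} \<and>
     (\<forall>v < n. v \<in> S \<or> (\<exists>s \<in> S. ucayley_adj n v s))"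

definition cycle_domination_number :: "nat \<Rightarrow> nat" where
  "cycle_domination_number n =
     (LEAST k. \<exists>cs. ucayley_cycle n cs \<and> ucayley_dominating n (set cs) \<and> length cs = k)"

definition jacobsthal :: "nat \<Rightarrow> nat" where
  "jacobsthal n = (LEAST m. m > 0 \<and> (\<forall>a::int. \<exists>k \<in> {a..<a + int m}. coprime k (int n)))"

definition omega :: "nat \<Rightarrow> nat" where
  "omega n = card (prime_factors n)"

definition M_c2 :: "nat set" where
  "M_c2 = {n. n > 0 \<and> int (jacobsthal n) - int (cycle_domination_number n) \<ge> 2}"

end

theory Submission
  imports Defs "HOL-Number_Theory.Cong"
begin

definition W :: "nat list" where "W = [22,5,4,21,2,13,0,19,26,27,14,25,18,29,16,23]"

lemma card_filter_upt: "card {i. i < n \<and> P i} = length (filter P [0..<n])"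
proof -
  have "{i. i < n \<and> P i} = set (filter P [0..<n])" by auto
  then show ?thesis using distinct_card[of "filter P [0..<n]"] by simp
qed

lemma W_lt_all: "list_all (\<lambda>i. W ! i < 30) [0..<16]" unfolding W_def by code_simp
lemma W_adj_all: "list_all (\<lambda>i. coprime (int (W!i) - int (W!(i+1))) 30) [0..<15]" unfolding W_def by code_simp
lemma W_cnt_all: "list_all (\<lambda>r. 4 \<le> length (filter (\<lambda>i. coprime (int r - int (W!i)) 30) [0..<16])) [0..<30]"
  unfolding W_def by code_simp
lemma U_cnt_all: "list_all (\<lambda>r. length (filter (\<lambda>i. coprime (int r - int i) 30) [0..<30]) = 8) [0..<30]"
  by code_simp
lemma C1_all: "length (filter (\<lambda>i. coprime (i + 20) (30::nat)) [0..<30]) = 8" by code_simp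
lemma C2_all: "length (filter (\<lambda>i. coprime (i + 20) (30::nat)) [0..<17]) = 3" by code_simp
lemma W_0: "W ! 0 = 22" by (simp add: W_def)
lemma W_15: "W ! 15 = 23" by (simp add: W_def)

lemma W_lt: assumes "i < 16" shows "W ! i < 30"
proof -
  have "i \<in> set [0..<16]" using assms by simp
  then show ?thesis using W_lt_all unfolding list_all_iff by blast
qed

lemma W_adj: assumes "i < 15" shows "coprime (int (W!i) - int (W!(i+1))) 30"
proof -
  have "i \<in> set [0..<15]" using assms by simp
  then show ?thesis using W_adj_all unfolding list_all_iff by blast
qed

lemma W_cnt: assumes "r < 30" shows "4 \<le> card {i. i < 16 \<and> coprime (int r - int (W!i)) 30}"
proof -
  have "r \<in> set [0..<30]" using assms by simp
  then show ?thesis unfolding card_filter_upt using W_cnt_all unfolding list_all_iff by blast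
qed

lemma U_cnt: assumes "r < 30" shows "card {i. i < 30 \<and> coprime (int r - int i) 30} = 8"
proof -
  have "r \<in> set [0..<30]" using assms by simp
  then show ?thesis unfolding card_filter_upt using U_cnt_all unfolding list_all_iff by blast
qed

lemma C1: "card {i. i < 30 \<and> coprime (i + 20) (30::nat)} = 8"
  unfolding card_filter_upt by (rule C1_all)
lemma C2: "card {i. i < 17 \<and> coprime (i + 20) (30::nat)} = 3"
  unfolding card_filter_upt by (rule C2_all)

lemma cop30_cong: "(a::int) mod 30 = b mod 30 \<Longrightarrow> coprime a 30 = coprime b 30"
  using coprime_mod_left_iff[of 30 a] coprime_mod_left_iff[of 30 b] by simp

lemma cop30_cong_nat: "(a::nat) mod 30 = b mod 30 \<Longrightarrow> coprime a 30 = coprime b 30"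
  using coprime_mod_left_iff[of 30 a] coprime_mod_left_iff[of 30 b] by simp

lemma cop30_shift: "coprime ((a::int) + 30 * k) 30 = coprime a 30"
  by (rule cop30_cong) simp

lemma window_card:
  fixes m a :: nat
  assumes m: "m > 0"
  shows "card {j. a \<le> j \<and> j < a + m \<and> Q (j mod m)} = card {i. i < m \<and> Q i}"
proof -
  let ?W = "{a..<a+m}"
  have inj: "inj_on (\<lambda>j. j mod m) ?W"
  proof (rule inj_onI)
    fix x y assume xy: "x \<in> ?W" "y \<in> ?W" "x mod m = y mod m"
    show "x = y"
    proof (rule ccontr)
      assume "x \<noteq> y"
      then consider "x < y" | "y < x" by linarith
      then show False
      proof cases
        case 1
        have "m dvd (y - x)" using xy(3) 1 by (metis less_imp_le_nat mod_eq_dvd_iff_nat)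
        moreover have "0 < y - x" "y - x < m" using 1 xy by auto
        ultimately show False using nat_dvd_not_less by blast
      next
        case 2
        have "m dvd (x - y)" using xy(3) 2 by (metis less_imp_le_nat mod_eq_dvd_iff_nat)
        moreover have "0 < x - y" "x - y < m" using 2 xy by auto
        ultimately show False using nat_dvd_not_less by blast
      qed
    qed
  qed
  have img: "(\<lambda>j. j mod m) ` ?W = {..<m}"
  proof (rule card_subset_eq)
    show "finite {..<m}" by simp
    show "(\<lambda>j. j mod m) ` ?W \<subseteq> {..<m}" using m by auto
    show "card ((\<lambda>j. j mod m) ` ?W) = card {..<m}" using card_image[OF inj] by simp
  qed
  have S: "{j. a \<le> j \<and> j < a + m \<and> Q (j mod m)} \<subseteq> ?W" by auto
  have "(\<lambda>j. j mod m) ` {j. a \<le> j \<and> j < a + m \<and> Q (j mod m)} = {i. i < m \<and> Q i}"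
  proof
    show "(\<lambda>j. j mod m) ` {j. a \<le> j \<and> j < a + m \<and> Q (j mod m)} \<subseteq> {i. i < m \<and> Q i}"
      using m by auto
    show "{i. i < m \<and> Q i} \<subseteq> (\<lambda>j. j mod m) ` {j. a \<le> j \<and> j < a + m \<and> Q (j mod m)}"
    proof
      fix i assume i: "i \<in> {i. i < m \<and> Q i}"
      then have "i \<in> (\<lambda>j. j mod m) ` ?W" using img by auto
      then obtain j where j: "j \<in> ?W" "i = j mod m" by auto
      then show "i \<in> (\<lambda>j. j mod m) ` {j. a \<le> j \<and> j < a + m \<and> Q (j mod m)}"
        using i by auto
    qed
  qed
  moreover have "card ((\<lambda>j. j mod m) ` {j. a \<le> j \<and> j < a + m \<and> Q (j mod m)})
      = card {j. a \<le> j \<and> j < a + m \<and> Q (j mod m)}"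
    by (rule card_image[OF inj_on_subset[OF inj S]])
  ultimately show ?thesis by simp
qed

lemma periodic_card:
  fixes m r :: nat
  assumes m: "m > 0"
  shows "card {j. j < m * t + r \<and> Q (j mod m)} = t * card {i. i < m \<and> Q i} + card {j. j < r \<and> Q (j mod m)}"
proof (induction t)
  case 0
  then show ?case by simp
next
  case (Suc t)
  have eq: "{j. j < m * Suc t + r \<and> Q (j mod m)} =
     {j. j < m * t + r \<and> Q (j mod m)} \<union> {j. m * t + r \<le> j \<and> j < (m * t + r) + m \<and> Q (j mod m)}"
    by auto
  have "card {j. j < m * Suc t + r \<and> Q (j mod m)} =
     card {j. j < m * t + r \<and> Q (j mod m)} + card {j. m * t + r \<le> j \<and> j < (m * t + r) + m \<and> Q (j mod m)}"
    unfolding eq by (rule card_Un_disjoint) auto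
  also have "\<dots> = card {j. j < m * t + r \<and> Q (j mod m)} + card {i. i < m \<and> Q i}"
    using window_card[OF m] by simp
  finally show ?case using Suc by simp
qed

lemma primes_exist: "\<exists>P. finite P \<and> card P = k \<and> (\<forall>p\<in>P. prime (p::nat) \<and> B < p)"
proof (induction k)
  case 0
  then show ?case by (intro exI[of _ "{}"]) auto
next
  case (Suc k)
  then obtain P where P: "finite P" "card P = k" "\<forall>p\<in>P. prime (p::nat) \<and> B < p" by blast
  obtain q where q: "prime q" "B + sum id P < q" using bigger_prime by blast
  have "q \<notin> P"
  proof
    assume "q \<in> P"
    then have "q \<le> sum id P" using P(1) member_le_sum[of q P id] by simp
    then show False using q by simp
  qed
  then show ?case using P q by (intro exI[of _ "insert q P"]) auto
qed


lemma c7: "coprime (7::int) 30" by code_simp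
lemma c23: "coprime (23::int) 30" by code_simp

definition tau :: "nat \<Rightarrow> nat \<Rightarrow> nat" where
  "tau t j = (if j < 30*t then j mod 30 else W ! (j - 30*t))"
definition vv :: "nat \<Rightarrow> nat \<Rightarrow> nat" where
  "vv t j = 30*j + tau t j"
definition Cs :: "nat \<Rightarrow> nat set" where
  "Cs t = {c::nat. 20 \<le> c \<and> c < 37 + 30*t \<and> coprime c 30}"

lemma tau_lt: "j < 30*t+16 \<Longrightarrow> tau t j < 30"
  unfolding tau_def using W_lt by auto

lemma vv_lt: "j < 30*t+16 \<Longrightarrow> vv t j < 30*(30*t+16)"
proof -
  assume j: "j < 30*t+16"
  have "vv t j < 30*j + 30" unfolding vv_def using tau_lt[OF j] by simp
  also have "\<dots> \<le> 30*(30*t+16)" using j by simp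
  finally show ?thesis .
qed

lemma vv_div: "j < 30*t+16 \<Longrightarrow> vv t j div 30 = j"
  unfolding vv_def using tau_lt by simp

lemma cop_diff: "coprime (int (vv t i) - int (vv t j)) 30 = coprime (int (tau t i) - int (tau t j)) 30"
proof -
  have e: "int (vv t i) - int (vv t j) = (int (tau t i) - int (tau t j)) + 30*(int i - int j)"
    unfolding vv_def by (simp add: algebra_simps)
  show ?thesis unfolding e by (rule cop30_shift)
qed

lemma tau_adj:
  assumes t: "t \<ge> 1" and i: "Suc i < 30*t+16"
  shows "coprime (int (tau t i) - int (tau t (Suc i))) 30"
proof -
  consider (a) "Suc i < 30*t" | (b) "Suc i = 30*t" | (c) "30*t \<le> i" by linarith
  then show ?thesis
  proof cases
    case a
    then have e: "tau t i = i mod 30" "tau t (Suc i) = Suc i mod 30" unfolding tau_def by auto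
    have "(int (i mod 30) - int (Suc i mod 30)) mod 30 = (int i - (int i + 1)) mod 30"
      by (simp add: of_nat_mod mod_diff_eq)
    also have "\<dots> = (-1) mod 30" by simp
    finally have "coprime (int (i mod 30) - int (Suc i mod 30)) 30 = coprime (-1::int) 30"
      by (rule cop30_cong)
    then show ?thesis using e by simp
  next
    case b
    then have "i = 30*(t-1) + 29" using t by simp
    then have "i mod 30 = 29" by simp
    then have e: "tau t i = 29" "tau t (Suc i) = 22" unfolding tau_def using b W_0 by auto
    show ?thesis using e c7 by simp
  next
    case c
    then have e: "tau t i = W ! (i - 30*t)" "tau t (Suc i) = W ! ((i - 30*t) + 1)"
      unfolding tau_def by (auto simp: Suc_diff_le)
    have "i - 30*t < 15" using c i by simp
    then show ?thesis using e W_adj by simp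
  qed
qed

lemma tau_wrap:
  assumes t: "t \<ge> 1"
  shows "coprime (int (tau t (30*t+15)) - int (tau t 0)) 30"
proof -
  have e: "tau t (30*t+15) = 23" "tau t 0 = 0" unfolding tau_def using t W_15 by auto
  show ?thesis using e c23 by simp
qed

lemma Cs_card: "card (Cs t) = 8*t+3"
proof -
  have inj: "inj_on (\<lambda>d::nat. d + 20) X" for X by (rule inj_onI) simp
  have "Cs t = (\<lambda>d. d + 20) ` {d. d < 30*t + 17 \<and> coprime (d + 20) (30::nat)}"
  proof
    show "Cs t \<subseteq> (\<lambda>d. d + 20) ` {d. d < 30*t + 17 \<and> coprime (d + 20) (30::nat)}"
    proof
      fix c assume "c \<in> Cs t"
      then have c: "20 \<le> c" "c < 37 + 30*t" "coprime c 30" unfolding Cs_def by auto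
      then have "c - 20 \<in> {d. d < 30*t + 17 \<and> coprime (d + 20) (30::nat)}" by simp
      moreover have "c = (c - 20) + 20" using c by simp
      ultimately show "c \<in> (\<lambda>d. d + 20) ` {d. d < 30*t + 17 \<and> coprime (d + 20) (30::nat)}" by blast
    qed
    show "(\<lambda>d. d + 20) ` {d. d < 30*t + 17 \<and> coprime (d + 20) (30::nat)} \<subseteq> Cs t"
      unfolding Cs_def by auto
  qed
  then have "card (Cs t) = card {d. d < 30*t + 17 \<and> coprime (d + 20) (30::nat)}"
    using card_image[OF inj] by simp
  also have "{d. d < 30*t + 17 \<and> coprime (d + 20) (30::nat)} = {d. d < 30*t + 17 \<and> coprime (d mod 30 + 20) (30::nat)}"
  proof -
    have "coprime (d + 20) (30::nat) = coprime (d mod 30 + 20) 30" for d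
      by (rule cop30_cong_nat) (simp add: mod_add_left_eq)
    then show ?thesis by simp
  qed
  also have "card \<dots> = t * card {i. i < 30 \<and> coprime (i + 20) (30::nat)} + card {j. j < 17 \<and> coprime (j mod 30 + 20) (30::nat)}"
    by (rule periodic_card) simp
  also have "{j. j < 17 \<and> coprime (j mod 30 + 20) (30::nat)} = {j. j < 17 \<and> coprime (j + 20) (30::nat)}"
    by auto
  finally show ?thesis using C1 C2 by simp
qed

lemma Cs_ge: "t \<le> card (Cs t)"
  using Cs_card[of t] by simp

lemma good_card:
  "8*t+4 \<le> card {j. j < 30*t+16 \<and> coprime (int y - int (tau t j)) 30}"
proof -
  define r where "r = y mod 30"
  have r: "r < 30" unfolding r_def by simp
  have yr: "coprime (int y - int a) 30 = coprime (int r - int a) 30" for a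
    by (rule cop30_cong) (simp add: r_def of_nat_mod mod_diff_left_eq)
  define A where "A = {j. j < 30*t \<and> coprime (int r - int (j mod 30)) 30}"
  define B0 where "B0 = {i. i < 16 \<and> coprime (int r - int (W!i)) 30}"
  define B where "B = (\<lambda>i. 30*t + i) ` B0"
  have cA: "card A = 8*t"
  proof -
    have "card A = t * card {i. i < 30 \<and> coprime (int r - int i) 30} + card {j. j < 0 \<and> coprime (int r - int (j mod 30)) 30}"
      unfolding A_def using periodic_card[of 30 t 0 "\<lambda>i. coprime (int r - int i) 30"] by simp
    then show ?thesis using U_cnt[OF r] by simp
  qed
  have cB: "4 \<le> card B"
  proof -
    have "card B = card B0" unfolding B_def by (rule card_image) (rule inj_onI, simp)
    then show ?thesis using W_cnt[OF r] unfolding B0_def by simp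
  qed
  have sub: "A \<union> B \<subseteq> {j. j < 30*t+16 \<and> coprime (int y - int (tau t j)) 30}"
  proof
    fix j assume "j \<in> A \<union> B"
    then consider "j \<in> A" | "j \<in> B" by blast
    then show "j \<in> {j. j < 30*t+16 \<and> coprime (int y - int (tau t j)) 30}"
    proof cases
      case 1
      then show ?thesis unfolding A_def tau_def using yr by auto
    next
      case 2
      then obtain i where i: "i \<in> B0" "j = 30*t + i" unfolding B_def by blast
      then show ?thesis unfolding B0_def tau_def using yr by auto
    qed
  qed
  have disj: "A \<inter> B = {}" unfolding A_def B_def by auto
  have u: "card (A \<union> B) = card A + card B"
    by (rule card_Un_disjoint) (auto simp: A_def B_def B0_def disj)
  have m: "card (A \<union> B) \<le> card {j. j < 30*t+16 \<and> coprime (int y - int (tau t j)) 30}"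
    by (rule card_mono[OF _ sub]) simp
  show ?thesis using u m cA cB by linarith
qed


lemma main:
  fixes t :: nat assumes t: "t \<ge> 1"
  shows "\<exists>n \<in> M_c2. omega n \<ge> t"
proof -
  define K where "K = 30*t + 16"
  obtain P where P: "finite P" "card P = card (Cs t)" "\<forall>p\<in>P. prime p \<and> 30*K < p"
    using primes_exist by blast
  define n where "n = 30 * \<Prod>P"
  have Pprime: "prime p" and Pbig: "30*K < p" if "p \<in> P" for p using P(3) that by auto
  have Pne: "P \<noteq> {}" using P(2) Cs_ge[of t] t by auto
  have "\<forall>a\<in>P. 0 < a" using Pbig by fastforce
  then have prodpos: "\<Prod>P > 0" using P(1) by simp
  have npos: "n > 0" unfolding n_def using prodpos by simp
  obtain p0 where p0: "p0 \<in> P" using Pne by blast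
  have "p0 dvd \<Prod>P" using dvd_prodI[OF P(1) p0, of "\<lambda>x. x"] by simp
  then have "p0 \<le> \<Prod>P" using prodpos by (simp add: dvd_imp_le)
  then have nbig: "30*K < n" unfolding n_def using Pbig[OF p0] by simp
  have pdvdn: "p dvd n" if "p \<in> P" for p
    using dvd_prodI[OF P(1) that, of "\<lambda>x. x"] unfolding n_def by simp
  have int_n: "int n = 30 * (\<Prod>p\<in>P. int p)" unfolding n_def by (simp add: of_nat_prod)
  have gen_cop: "coprime d (int n)" if d30: "coprime d 30" and nd: "\<forall>p\<in>P. \<not> int p dvd d" for d :: int
  proof -
    have "coprime d (\<Prod>p\<in>P. int p)"
    proof (rule prod_coprime_right)
      fix p assume p: "p \<in> P"
      have "prime (int p)" using Pprime[OF p] by simp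
      then have "coprime (int p) d" using nd p prime_imp_coprime by blast
      then show "coprime d (int p)" by (simp add: coprime_commute)
    qed
    then show ?thesis unfolding int_n using d30 by simp
  qed
  have small_nd: "\<not> int p dvd d" if "d \<noteq> 0" "\<bar>d\<bar> < int (30*K)" "p \<in> P" for d p
  proof
    assume "int p dvd d"
    then have "\<bar>int p\<bar> \<le> \<bar>d\<bar>" using dvd_imp_le_int that(1) by blast
    then show False using that(2) Pbig[OF that(3)] by simp
  qed
  have vvK: "vv t j < 30*K" if "j < K" for j using vv_lt that unfolding K_def by blast
  have bound: "\<bar>int (vv t i) - int (vv t j)\<bar> < int (30*K)" if "i < K" "j < K" for i j
    using vvK[OF that(1)] vvK[OF that(2)] by linarith
  have vv_inj: "vv t i = vv t j \<Longrightarrow> i < K \<Longrightarrow> j < K \<Longrightarrow> i = j" for i j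
    using vv_div unfolding K_def by metis
  have vv_adj: "ucayley_adj n (vv t i) (vv t j)"
    if ij: "i < K" "j < K" and c: "coprime (int (tau t i) - int (tau t j)) 30" for i j
  proof -
    have c': "coprime (int (vv t i) - int (vv t j)) 30" using c cop_diff by simp
    have "int (vv t i) - int (vv t j) \<noteq> 0"
    proof
      assume "int (vv t i) - int (vv t j) = 0"
      then show False using c' by simp
    qed
    then have "coprime (int (vv t i) - int (vv t j)) (int n)"
      using gen_cop[OF c'] small_nd bound[OF ij] by blast
    then show ?thesis unfolding ucayley_adj_def using vvK[OF ij(1)] vvK[OF ij(2)] nbig by simp
  qed
  define cs where "cs = map (vv t) [0..<K]"
  have K3: "3 \<le> K" unfolding K_def by simp
  have cyc: "ucayley_cycle n cs"
    unfolding ucayley_cycle_def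
  proof (intro conjI)
    show "3 \<le> length cs" unfolding cs_def using K3 by simp
    show "distinct cs" unfolding cs_def
      using vv_inj by (auto simp: distinct_map inj_on_def)
    show "set cs \<subseteq> {0..<n}" unfolding cs_def using vvK nbig by fastforce
    show "\<forall>i<length cs - 1. ucayley_adj n (cs ! i) (cs ! (i + 1))"
    proof (intro allI impI)
      fix i assume i: "i < length cs - 1"
      then have i': "Suc i < K" unfolding cs_def by simp
      have "cs ! i = vv t i" "cs ! (i+1) = vv t (Suc i)" unfolding cs_def using i' by auto
      moreover have "coprime (int (tau t i) - int (tau t (Suc i))) 30"
        using tau_adj[OF t] i' unfolding K_def by blast
      ultimately show "ucayley_adj n (cs ! i) (cs ! (i + 1))" using vv_adj i' by simp
    qed
    show "ucayley_adj n (last cs) (hd cs)"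
    proof -
      have "last cs = vv t (30*t+15)" "hd cs = vv t 0" unfolding cs_def K_def by (auto simp: last_map hd_map add.commute)
      then show ?thesis using vv_adj[of "30*t+15" 0] tau_wrap[OF t] unfolding K_def by simp
    qed
  qed
  have dom: "ucayley_dominating n (set cs)"
    unfolding ucayley_dominating_def
  proof (intro conjI allI impI)
    show "set cs \<subseteq> {0..<n}" using cyc unfolding ucayley_cycle_def by blast
    fix y assume y: "y < n"
    define Good where "Good = {j. j < K \<and> coprime (int y - int (tau t j)) 30}"
    define Bd where "Bd = (\<lambda>p. {j. j < K \<and> int p dvd (int y - int (vv t j))})"
    have fBd: "finite (Bd p)" for p unfolding Bd_def by simp
    have Bd1: "card (Bd p) \<le> 1" if p: "p \<in> P" for p
    proof -
      have "\<forall>a1\<in>Bd p. \<forall>a2\<in>Bd p. a1 = a2"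
      proof (intro ballI)
        fix a1 a2 assume a: "a1 \<in> Bd p" "a2 \<in> Bd p"
        then have a12: "a1 < K" "a2 < K" unfolding Bd_def by auto
        have d1: "int p dvd int y - int (vv t a1)" and d2: "int p dvd int y - int (vv t a2)"
          using a unfolding Bd_def by auto
        have "int p dvd (int y - int (vv t a2)) - (int y - int (vv t a1))"
          by (rule dvd_diff[OF d2 d1])
        then have dv: "int p dvd int (vv t a1) - int (vv t a2)" by simp
        show "a1 = a2"
        proof (rule ccontr)
          assume "a1 \<noteq> a2"
          then have "vv t a1 \<noteq> vv t a2" using vv_inj a12 by blast
          then have "int (vv t a1) - int (vv t a2) \<noteq> 0" by simp
          then show False using small_nd bound[OF a12] dv p by blast
        qed
      qed
      then show ?thesis using card_le_Suc0_iff_eq[OF fBd] by simp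
    qed
    have cBad: "card (\<Union>p\<in>P. Bd p) \<le> card P"
    proof -
      have "card (\<Union>p\<in>P. Bd p) \<le> (\<Sum>p\<in>P. card (Bd p))" by (rule card_UN_le[OF P(1)])
      also have "\<dots> \<le> (\<Sum>p\<in>P. 1)" by (rule sum_mono) (use Bd1 in simp)
      finally show ?thesis by simp
    qed
    have cGood: "8*t+4 \<le> card Good" unfolding Good_def K_def by (rule good_card)
    have "\<exists>j\<in>Good. j \<notin> (\<Union>p\<in>P. Bd p)"
    proof (rule ccontr)
      assume "\<not> ?thesis"
      then have "Good \<subseteq> (\<Union>p\<in>P. Bd p)" by blast
      then have "card Good \<le> card (\<Union>p\<in>P. Bd p)" by (rule card_mono[rotated]) (simp add: P(1) fBd)
      then show False using cBad cGood P(2) Cs_card[of t] by simp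
    qed
    then obtain j where j: "j \<in> Good" "j \<notin> (\<Union>p\<in>P. Bd p)" by blast
    have jK: "j < K" using j(1) unfolding Good_def by simp
    have "coprime (int y - int (vv t j)) 30"
    proof -
      have e: "int y - int (vv t j) = (int y - int (tau t j)) + 30 * (- int j)"
        unfolding vv_def by (simp add: algebra_simps)
      show ?thesis unfolding e cop30_shift using j(1) unfolding Good_def by simp
    qed
    moreover have "\<forall>p\<in>P. \<not> int p dvd (int y - int (vv t j))"
      using j(2) jK unfolding Bd_def by blast
    ultimately have "coprime (int y - int (vv t j)) (int n)" by (rule gen_cop)
    then have "ucayley_adj n y (vv t j)" unfolding ucayley_adj_def using y vvK[OF jK] nbig by simp
    moreover have "vv t j \<in> set cs" unfolding cs_def using jK by simp
    ultimately show "y \<in> set cs \<or> (\<exists>s\<in>set cs. ucayley_adj n y s)" by blast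
  qed
  have gam: "cycle_domination_number n \<le> K"
    unfolding cycle_domination_number_def
  proof (rule Least_le)
    show "\<exists>cs'. ucayley_cycle n cs' \<and> ucayley_dominating n (set cs') \<and> length cs' = K"
      using cyc dom by (intro exI[of _ cs]) (simp add: cs_def)
  qed
  have finC: "finite (Cs t)" unfolding Cs_def by (rule finite_subset[of _ "{..<37+30*t}"]) auto
  obtain h where h: "bij_betw h (Cs t) P" using finite_same_card_bij[OF finC P(1)] P(2) by metis
  have hP: "h c \<in> P" if "c \<in> Cs t" for c using h that by (auto simp: bij_betw_def)
  have h_inj: "h c1 = h c2 \<Longrightarrow> c1 \<in> Cs t \<Longrightarrow> c2 \<in> Cs t \<Longrightarrow> c1 = c2" for c1 c2
    using h by (auto simp: bij_betw_def inj_on_def)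
  have C0: "0 \<notin> Cs t" unfolding Cs_def by simp
  have cop30p: "coprime 30 p" if "p \<in> P" for p
  proof -
    have "\<not> p dvd 30"
    proof
      assume "p dvd 30"
      then have "p \<le> 30" by (simp add: dvd_imp_le)
      then show False using Pbig[OF that] unfolding K_def by simp
    qed
    then have "coprime p 30" using Pprime[OF that] prime_imp_coprime by blast
    then show ?thesis by (simp add: coprime_commute)
  qed
  define A where "A = insert 0 (Cs t)"
  define mm where "mm i = (if i = 0 then 30 else h i)" for i
  define u where "u i = (if i = 0 then 0 else h i - i mod h i)" for i
  have "\<exists>x. \<forall>i \<in> A. [x = u i] (mod mm i)"
  proof (rule chinese_remainder_nat)
    show "finite A" unfolding A_def using finC by simp
    show "\<forall>i\<in>A. \<forall>j\<in>A. i \<noteq> j \<longrightarrow> coprime (mm i) (mm j)"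
    proof (intro ballI impI)
      fix i j assume ij: "i \<in> A" "j \<in> A" "i \<noteq> j"
      show "coprime (mm i) (mm j)"
      proof (cases "i = 0")
        case True
        then have "j \<in> Cs t" "j \<noteq> 0" using ij unfolding A_def by auto
        then show ?thesis using True cop30p hP unfolding mm_def by simp
      next
        case False
        then have i: "i \<in> Cs t" using ij unfolding A_def by auto
        show ?thesis
        proof (cases "j = 0")
          case True
          then show ?thesis using False i cop30p hP unfolding mm_def by (simp add: coprime_commute)
        next
          case False2: False
          then have j: "j \<in> Cs t" using ij unfolding A_def by auto
          have "h i \<noteq> h j" using h_inj i j ij(3) by blast
          then have "coprime (h i) (h j)" using primes_coprime Pprime hP i j by blast
          then show ?thesis using False False2 unfolding mm_def by simp
        qed
      qed
    qed
  qed
  then obtain x where x: "\<forall>i \<in> A. [x = u i] (mod mm i)" by blast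
  have run: "\<not> coprime (int x + int c) (int n)" if c: "20 \<le> c" "c < 37 + 30*t" for c
  proof (cases "coprime c (30::nat)")
    case True
    then have cC: "c \<in> Cs t" unfolding Cs_def using c by simp
    define p where "p = h c"
    have pP: "p \<in> P" unfolding p_def using hP[OF cC] .
    have pos: "p > 0" using Pbig[OF pP] by simp
    have cne: "c \<noteq> 0" using c by simp
    have "[x = p - c mod p] (mod p)" using x cC cne unfolding A_def mm_def u_def p_def by auto
    then have "[x + c = (p - c mod p) + c] (mod p)" by (rule cong_add) simp
    moreover have "(p - c mod p) + c = p * (1 + c div p)"
    proof -
      have r: "c mod p \<le> c" "c mod p < p" using pos by (simp_all add: mod_less_eq_dividend)
      have "(p - c mod p) + c = p + (c - c mod p)" using r by linarith
      also have "c - c mod p = p * (c div p)" by (simp add: minus_mod_eq_mult_div)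
      finally show ?thesis by (simp add: algebra_simps)
    qed
    ultimately have "[x + c = 0] (mod p)" by (simp add: cong_def)
    then have "p dvd x + c" by (simp add: cong_0_iff)
    then have d1: "int p dvd int x + int c" by (metis of_nat_add of_nat_dvd_iff)
    have d2: "int p dvd int n" using pdvdn[OF pP] by simp
    show ?thesis
    proof
      assume "coprime (int x + int c) (int n)"
      then have "\<bar>int p\<bar> = 1" using coprime_common_divisor_int d1 d2 by blast
      then show False using Pbig[OF pP] unfolding K_def by simp
    qed
  next
    case False
    have "[x = 0] (mod 30)" using x unfolding A_def mm_def u_def by auto
    then have "x mod 30 = 0" by (simp add: cong_def)
    then have "(x + c) mod 30 = c mod 30" by (metis add.left_neutral mod_add_left_eq)
    then have nc: "\<not> coprime (x + c) (30::nat)" using False cop30_cong_nat by blast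
    show ?thesis
    proof
      assume "coprime (int x + int c) (int n)"
      then have "coprime (x + c) n" using coprime_int_iff[of "x + c" n] by (metis of_nat_add)
      then have "coprime (x + c) 30" unfolding n_def by simp
      then show False using nc by simp
    qed
  qed
  have Jex: "\<exists>m. m > 0 \<and> (\<forall>a::int. \<exists>k \<in> {a..<a + int m}. coprime k (int n))"
  proof (intro exI conjI allI)
    show "n > 0" by (rule npos)
    fix a :: int
    define k where "k = a + (1 - a) mod int n"
    have "k \<in> {a..<a + int n}" unfolding k_def using npos by simp
    moreover have "coprime k (int n)"
    proof -
      have "k mod int n = 1 mod int n" unfolding k_def by (simp add: mod_add_right_eq)
      then have "coprime (k mod int n) (int n) = coprime (1 mod int n) (int n)" by simp
      then show ?thesis using npos by simp
    qed
    ultimately show "\<exists>k \<in> {a..<a + int n}. coprime k (int n)" by blast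
  qed
  have Jprop: "jacobsthal n > 0 \<and> (\<forall>a::int. \<exists>k \<in> {a..<a + int (jacobsthal n)}. coprime k (int n))"
    unfolding jacobsthal_def by (rule LeastI_ex[OF Jex])
  have Jge: "K + 2 \<le> jacobsthal n"
  proof (rule ccontr)
    assume "\<not> K + 2 \<le> jacobsthal n"
    then have JK: "jacobsthal n \<le> 30*t + 17" unfolding K_def by simp
    obtain k where k: "k \<in> {int x + 20..<int x + 20 + int (jacobsthal n)}" "coprime k (int n)"
      using Jprop by blast
    define c where "c = nat (k - int x)"
    have c: "20 \<le> c" "c < 37 + 30*t" using k(1) JK unfolding c_def by auto
    have "int x + int c = k" using k(1) unfolding c_def by auto
    then show False using run[OF c] k(2) by simp
  qed
  have om: "card P \<le> omega n"
  proof -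
    have "P \<subseteq> prime_factors n" using npos pdvdn Pprime by (auto simp: in_prime_factors_iff)
    then show ?thesis unfolding omega_def by (rule card_mono[rotated]) simp
  qed
  have "n \<in> M_c2" unfolding M_c2_def using npos Jge gam by simp
  moreover have "omega n \<ge> t" using om P(2) Cs_ge[of t] by simp
  ultimately show ?thesis by blast
qed

theorem theorem3p1:
  shows "\<forall>N::nat. \<exists>n \<in> M_c2. omega n > N"
proof
  fix N :: nat
  obtain n where n: "n \<in> M_c2" "omega n \<ge> Suc N" using main[of "Suc N"] by auto
  have "N < omega n" using n(2) by simp
  then show "\<exists>n \<in> M_c2. omega n > N" using n(1) by blast
qed

end
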